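(* For every integer $q\ge2$, $S_q(q):=\sum_{l_1,l_2\in\mathbb Z}H_q(l_1,l_2,q)=0$.
   Context: $(z)_k=z(z+1)\cdots(z+k-1)$ denotes the rising factorial. For integers $l_1,l_2,k$ and $q\ge1$, \[ H_q(l_{1},l_{2},k)=\frac{(-1)^{l_1+l_2}\left(-\frac{1}{2}\right)_{l_1} \left(-\frac{1}{2}\right)_{l_2} \left(\frac{1}{2}\right)_{q-l_{1}} \left(\frac{1}{2}\right)_{q-l_{2}}}{(2q-l_{1}-l_{2}-k)!\,(l_{2}-l_{1}+k)!\,(l_{1}-l_{2}+k)!\,(l_{1}+l_{2}-k)!}, \] where Pochhammer symbols and factorials are expressed via the Gamma function, with $1/\Gamma$ vanishing at non-positive integers (so only finitely many terms are non-zero). *)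

theory Defs
  imports "HOL-Analysis.Analysis"
begin

definition poch_int :: "real \<Rightarrow> int \<Rightarrow> real" where
  "poch_int a l = Gamma (a + of_int l) / Gamma a"

text \<open>Reciprocal factorial 1/n! = 1/Gamma(n+1), vanishing at negative integers n.\<close>
definition rfact :: "int \<Rightarrow> real" where
  "rfact n = rGamma (of_int n + 1)"

definition H :: "int \<Rightarrow> int \<Rightarrow> int \<Rightarrow> int \<Rightarrow> real" where
  "H q l1 l2 k =
     (-1) powi (l1 + l2) * poch_int (-1/2) l1 * poch_int (-1/2) l2
       * poch_int (1/2) (q - l1) * poch_int (1/2) (q - l2)
       * rfact (2*q - l1 - l2 - k) * rfact (l2 - l1 + k)
       * rfact (l1 - l2 + k) * rfact (l1 + l2 - k)"

end

theory Submission
  imports Defs "HOL-Computational_Algebra.Formal_Power_Series"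
begin

lemma rfact_neg: "n < 0 \<Longrightarrow> rfact n = 0"
  unfolding rfact_def rGamma_eq_zero_iff
  by (metis add.commute nonpos_Ints_of_int of_int_1 of_int_add zle_add1_eq_le not_less)

lemma rfact_nat: "rfact (int n) = 1 / fact n"
proof -
  have "rfact (int n) = inverse (Gamma (1 + of_nat n))"
    unfolding rfact_def Gamma_def by (simp add: add.commute)
  also have "\<dots> = 1 / fact n" by (simp add: Gamma_fact divide_inverse)
  finally show ?thesis .
qed

lemma poch_nat:
  assumes "(a::real) \<notin> \<int>\<^sub>\<le>\<^sub>0"
  shows "poch_int a (int n) = pochhammer a n"
  unfolding poch_int_def using pochhammer_Gamma[OF assms, of n] by simp

definition dd :: "nat \<Rightarrow> real" where
  "dd l = pochhammer (-1/2) l * pochhammer (1/2) l / fact (2*l)"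

lemma dd_rec: "real (n+1) * dd (n+1) = (2 * real n - 1) / 8 * dd n"
proof -
  have f: "fact (2*(n+1)) = (fact (2*n) :: real) * (2*n+1) * (2*n+2)"
    by (simp add: algebra_simps)
  have e: "dd (n+1) = dd n * ((real n - 1/2) * (real n + 1/2) / ((2*real n+1) * (2*real n+2)))"
    unfolding dd_def f by (simp add: pochhammer_Suc algebra_simps)
  have "real (n+1) * ((real n - 1/2) * (real n + 1/2) / ((2*real n+1) * (2*real n+2)))
      = (2 * real n - 1) / 8"
  proof -
    have h: "(2*real n+1) * (2*real n+2) \<noteq> 0" by (simp add: add_pos_pos)
    have "real (n+1) * ((real n - 1/2) * (real n + 1/2)) * 8 = (2 * real n - 1) * ((2*real n+1) * (2*real n+2))"
      by (simp add: algebra_simps)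
    then show ?thesis using h by (simp add: divide_simps)
  qed
  then show ?thesis unfolding e by (metis mult.assoc mult.commute)
qed

lemma dd_conv:
  assumes "n \<ge> 2"
  shows "(\<Sum>i=0..n. dd i * dd (n - i)) = 0"
proof -
  define f where "f = Abs_fps dd"
  have A: "(1 - fps_const (1/4) * fps_X) * fps_deriv f = - fps_const (1/8) * f"
  proof (rule fps_ext)
    fix n
    show "fps_nth ((1 - fps_const (1/4) * fps_X) * fps_deriv f) n = fps_nth (- fps_const (1/8) * f) n"
    proof (cases n)
      case 0
      then show ?thesis using dd_rec[of 0] by (simp add: f_def algebra_simps)
    next
      case (Suc m)
      have "fps_nth ((1 - fps_const (1/4) * fps_X) * fps_deriv f) n
          = real (n+1) * dd (n+1) - 1/4 * (real n * dd n)"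
        using Suc by (simp add: f_def algebra_simps mult.assoc)
      also have "\<dots> = -1/8 * dd n" using dd_rec[of n] by (simp add: field_simps)
      finally show ?thesis by (simp add: f_def)
    qed
  qed
  define g where "g = f * f"
  have B: "(1 - fps_const (1/4) * fps_X) * fps_deriv g = - fps_const (1/4) * g"
  proof -
    have "(1 - fps_const (1/4) * fps_X) * fps_deriv g
        = 2 * f * ((1 - fps_const (1/4) * fps_X) * fps_deriv f)"
      unfolding g_def fps_deriv_mult by (simp add: algebra_simps)
    also have "\<dots> = 2 * f * (- fps_const (1/8) * f)" by (simp add: A)
    also have "\<dots> = - fps_const (2 * (1/8)) * g" unfolding g_def numeral_fps_const
      by (simp add: algebra_simps fps_const_mult [symmetric] del: fps_const_mult)
    finally show ?thesis by simp
  qed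
  have C: "real (m+2) * fps_nth g (m+2) = real m / 4 * fps_nth g (m+1)" for m
  proof -
    have "fps_nth ((1 - fps_const (1/4) * fps_X) * fps_deriv g) (m+1) = fps_nth (- fps_const (1/4) * g) (m+1)"
      by (simp add: B)
    then have "real (m+2) * fps_nth g (m+2) - 1/4 * (real (m+1) * fps_nth g (m+1)) = -1/4 * fps_nth g (m+1)"
      by (simp add: algebra_simps mult.assoc)
    then show ?thesis by (simp add: field_simps)
  qed
  have D: "fps_nth g (m+2) = 0" for m
  proof (induction m)
    case 0
    then show ?case using C[of 0] by simp
  next
    case (Suc m)
    then show ?case using C[of "Suc m"] by simp
  qed
  have "fps_nth g n = (\<Sum>i=0..n. dd i * dd (n - i))" unfolding g_def f_def by (simp add: fps_mult_nth)
  moreover have "fps_nth g n = 0" using D[of "n-2"] assms le_add_diff_inverse2 by metis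
  ultimately show ?thesis by simp
qed

lemma H_zero:
  assumes "\<not> (l1 + l2 = q \<and> 0 \<le> l1 \<and> l1 \<le> q)"
  shows "H q l1 l2 q = 0"
proof -
  have "2*q - l1 - l2 - q < 0 \<or> l2 - l1 + q < 0 \<or> l1 - l2 + q < 0 \<or> l1 + l2 - q < 0"
    using assms by linarith
  then show ?thesis unfolding H_def using rfact_neg by auto
qed

lemma H_val:
  assumes "i \<le> n"
  shows "H (int n) (int i) (int n - int i) (int n) = (-1) ^ n * (dd i * dd (n - i))"
proof -
  have nz1: "(-1/2::real) \<notin> \<int>\<^sub>\<le>\<^sub>0"
  proof
    assume "(-1/2::real) \<in> \<int>\<^sub>\<le>\<^sub>0"
    then obtain k :: int where "(-1/2::real) = of_int k" by (auto elim!: nonpos_Ints_cases)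
    then have "(-1::real) = 2 * of_int k" by linarith
    then have "(-1::int) = 2 * k" by linarith
    then show False by presburger
  qed
  have nz2: "(1/2::real) \<notin> \<int>\<^sub>\<le>\<^sub>0" by (auto elim!: nonpos_Ints_cases)
  have e1: "int n - int i = int (n - i)" using assms by simp
  have e2: "2 * int n - int i - int (n - i) - int n = int 0" using assms by simp
  have e3: "int (n - i) - int i + int n = int (2 * (n - i))" using assms by simp
  have e4: "int i - int (n - i) + int n = int (2 * i)" using assms by simp
  have e5: "int i + int (n - i) - int n = int 0" using assms by simp
  have e6: "int n - int (n - i) = int i" using assms by simp
  have pw: "(-1::real) powi (int i + int (n - i)) = (-1) ^ n"
    using assms by (simp add: power_int_of_nat flip: of_nat_add)
  show ?thesis
    unfolding H_def e1 e2 e3 e4 e5 e6 pw rfact_nat poch_nat[OF nz1] poch_nat[OF nz2] dd_def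
    by (simp only: fact_0 div_by_1 divide_inverse mult_ac inverse_1 mult_1_right mult_1_left)
qed

theorem lemma7p4:
  fixes q :: int
  assumes "q \<ge> 2"
  shows "((\<lambda>(l1, l2). H q l1 l2 q) has_sum 0) (UNIV :: (int \<times> int) set)"
proof -
  define n where "n = nat q"
  have qn: "q = int n" unfolding n_def using assms by simp
  have n2: "n \<ge> 2" unfolding n_def using assms by simp
  define S where "S = (\<lambda>l. (l, q - l)) ` {0..q}"
  have "(\<Sum>x\<in>S. (\<lambda>(l1, l2). H q l1 l2 q) x) = (\<Sum>l\<in>{0..q}. H q l (q - l) q)"
    unfolding S_def by (subst sum.reindex) (simp_all add: inj_on_def)
  also have "\<dots> = (\<Sum>i\<in>{0..n}. H q (int i) (q - int i) q)"
  proof -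
    have "{0..q} = int ` {0..n}" unfolding qn by (simp add: image_int_atLeastAtMost)
    then show ?thesis by (simp add: sum.reindex)
  qed
  also have "\<dots> = (\<Sum>i\<in>{0..n}. (-1) ^ n * (dd i * dd (n - i)))"
    unfolding qn by (rule sum.cong) (simp_all add: H_val)
  also have "\<dots> = 0" by (simp add: sum_distrib_left[symmetric] dd_conv[OF n2])
  finally have sumS: "(\<Sum>x\<in>S. (\<lambda>(l1, l2). H q l1 l2 q) x) = 0" .
  show ?thesis
  proof (rule has_sum_finite_neutralI[where B = S])
    show "finite S" unfolding S_def by simp
    show "S \<subseteq> UNIV" by simp
    show "(\<lambda>(l1, l2). H q l1 l2 q) x = 0" if "x \<in> UNIV - S" for x
    proof -
      obtain l1 l2 where x: "x = (l1, l2)" by fastforce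
      have "\<not> (l1 + l2 = q \<and> 0 \<le> l1 \<and> l1 \<le> q)"
      proof
        assume h: "l1 + l2 = q \<and> 0 \<le> l1 \<and> l1 \<le> q"
        then have "x \<in> S" unfolding S_def x by (auto intro!: image_eqI[where x = l1])
        then show False using that by simp
      qed
      then show ?thesis using H_zero x by simp
    qed
  qed (use sumS in simp)
qed

end
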